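(* Let $k\ge 2$, let $H$ be a finite $k$-uniform hypergraph and let $G$ be the 2-section of $H$. For every nonnegative integer $t$, the graph ${\rm ILT}'_t(G)$ is the 2-section of ${\rm ILTH}_t(H)$.
   Context: The 2-section of a hypergraph is the graph on the same vertex set in which two distinct vertices are adjacent iff some hyperedge contains both. ${\rm ILTH}_t(H)$ is defined by ${\rm ILTH}_0(H)=H$ and: given $H_t={\rm ILTH}_t(H)$, for each vertex $x$ add a new vertex $x'$ (its clone), and let the hyperedges of $H_{t+1}$ be those of $H_t$ together with all $e-x+x'=(e\setminus\{x\})\cup\{x'\}$ for $e\in E(H_t)$, $x\in e$. The graph process ${\rm ILT}'$: ${\rm ILT}'_0(G)=G$; given ${\rm ILT}'_t(G)$, the graph ${\rm ILT}'_{t+1}(G)$ has vertex set consisting of every vertex $v$ of ${\rm ILT}'_t(G)$ together with a new vertex $v'$ for each such $v$, and edge set consisting of $uv$, $uv'$ and $u'v$ for every edge $uv$ of ${\rm ILT}'_t(G)$ (and no other edges). *)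

theory Defs
  imports Main
begin

definition k_uniform :: "nat \<Rightarrow> 'v set \<Rightarrow> 'v set set \<Rightarrow> bool" where
  "k_uniform k V E \<longleftrightarrow> (\<forall>e\<in>E. e \<subseteq> V \<and> card e = k)"

definition two_section :: "'v set \<times> 'v set set \<Rightarrow> 'v set \<times> ('v \<times> 'v) set" where
  "two_section H = (fst H, {(u, v). u \<noteq> v \<and> (\<exists>e\<in>snd H. u \<in> e \<and> v \<in> e)})"

(* Vertex naming: an original vertex a is (a,0); at step t the clone of (a,n) is
   (a, n + 2^t).  Since all vertices present at step t have second component < 2^t,
   clones are fresh and distinct. *)
definition clone :: "nat \<Rightarrow> 'a \<times> nat \<Rightarrow> 'a \<times> nat" where
  "clone t x = (fst x, snd x + 2 ^ t)"

definition emb :: "'a \<Rightarrow> 'a \<times> nat" where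
  "emb a = (a, 0)"

fun ILTH :: "nat \<Rightarrow> 'a set \<times> 'a set set \<Rightarrow> ('a \<times> nat) set \<times> ('a \<times> nat) set set" where
  "ILTH 0 H = (emb ` fst H, (\<lambda>e. emb ` e) ` snd H)"
| "ILTH (Suc t) H =
     (let V = fst (ILTH t H); E = snd (ILTH t H) in
      (V \<union> clone t ` V,
       E \<union> {(e - {x}) \<union> {clone t x} | e x. e \<in> E \<and> x \<in> e}))"

fun ILT' :: "nat \<Rightarrow> 'a set \<times> ('a \<times> 'a) set \<Rightarrow> ('a \<times> nat) set \<times> (('a \<times> nat) \<times> ('a \<times> nat)) set" where
  "ILT' 0 G = (emb ` fst G, (\<lambda>(u, v). (emb u, emb v)) ` snd G)"
| "ILT' (Suc t) G =
     (let V = fst (ILT' t G); R = snd (ILT' t G) in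
      (V \<union> clone t ` V,
       R \<union> {(u, clone t v) | u v. (u, v) \<in> R} \<union> {(clone t u, v) | u v. (u, v) \<in> R}))"

end

theory Submission
  imports Defs
begin

lemma ILTH_inv:
  assumes "\<forall>e\<in>E. e \<subseteq> V"
  shows "(\<forall>v\<in>fst (ILTH t (V, E)). snd v < 2 ^ t) \<and>
         (\<forall>e\<in>snd (ILTH t (V, E)). e \<subseteq> fst (ILTH t (V, E)))"
proof (induction t)
  case 0
  then show ?case using assms by (auto simp: emb_def)
next
  case (Suc t)
  have a: "\<forall>v\<in>fst (ILTH t (V, E)). snd v < 2 ^ Suc t"
    using Suc by (auto intro: less_le_trans)
  have b: "\<forall>v\<in>fst (ILTH t (V, E)). snd (clone t v) < 2 ^ Suc t"
    using Suc by (auto simp: clone_def)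
  have c: "\<forall>e\<in>snd (ILTH (Suc t) (V, E)). e \<subseteq> fst (ILTH (Suc t) (V, E))"
  proof
    fix e assume "e \<in> snd (ILTH (Suc t) (V, E))"
    then have "e \<in> snd (ILTH t (V, E)) \<or> (\<exists>e0 x. e = (e0 - {x}) \<union> {clone t x} \<and> e0 \<in> snd (ILTH t (V, E)) \<and> x \<in> e0)"
      by (simp add: Let_def)
    then show "e \<subseteq> fst (ILTH (Suc t) (V, E))"
    proof
      assume "e \<in> snd (ILTH t (V, E))"
      then show ?thesis using Suc by (auto simp: Let_def)
    next
      assume "\<exists>e0 x. e = (e0 - {x}) \<union> {clone t x} \<and> e0 \<in> snd (ILTH t (V, E)) \<and> x \<in> e0"
      then obtain e0 x where "e = (e0 - {x}) \<union> {clone t x}" "e0 \<in> snd (ILTH t (V, E))" "x \<in> e0" by blast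
      moreover have "e0 \<subseteq> fst (ILTH t (V, E))" using Suc calculation(2) by blast
      ultimately show ?thesis by (simp add: Let_def) blast
    qed
  qed
  have d: "fst (ILTH (Suc t) (V, E)) = fst (ILTH t (V, E)) \<union> clone t ` fst (ILTH t (V, E))"
    by (simp add: Let_def)
  show ?case using a b c unfolding d by blast
qed

theorem lemma2p2:
  fixes V :: "'a set" and E :: "'a set set" and k t :: nat
  assumes "k \<ge> 2" and "finite V" and "k_uniform k V E"
  shows "ILT' t (two_section (V, E)) = two_section (ILTH t (V, E))"
proof (induction t)
  case 0
  have "snd (ILT' 0 (two_section (V, E))) = snd (two_section (ILTH 0 (V, E)))"
  proof (intro equalityI subsetI)
    fix p assume "p \<in> snd (ILT' 0 (two_section (V, E)))"
    then obtain u v e where "p = (emb u, emb v)" "u \<noteq> v" "e \<in> E" "u \<in> e" "v \<in> e"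
      by (auto simp: two_section_def)
    then show "p \<in> snd (two_section (ILTH 0 (V, E)))"
      by (auto simp: two_section_def emb_def)
  next
    fix p assume "p \<in> snd (two_section (ILTH 0 (V, E)))"
    then obtain u v e where "p = (emb u, emb v)" "u \<noteq> v" "e \<in> E" "u \<in> e" "v \<in> e"
      by (auto simp: two_section_def emb_def)
    then show "p \<in> snd (ILT' 0 (two_section (V, E)))"
      by (auto simp: two_section_def)
  qed
  then show ?case by (simp add: two_section_def prod_eq_iff)
next
  case (Suc t)
  have EV: "\<forall>e\<in>E. e \<subseteq> V" using assms(3) by (auto simp: k_uniform_def)
  define Vt where "Vt = fst (ILTH t (V, E))"
  define Et where "Et = snd (ILTH t (V, E))"
  have inv1: "\<And>v. v \<in> Vt \<Longrightarrow> snd v < 2 ^ t" and inv2: "\<And>e. e \<in> Et \<Longrightarrow> e \<subseteq> Vt"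
    using ILTH_inv[OF EV, of t] unfolding Vt_def Et_def by auto
  have fresh: "\<And>a b. a \<in> Vt \<Longrightarrow> b \<in> Vt \<Longrightarrow> clone t a \<noteq> b"
    using inv1 by (fastforce simp: clone_def)
  have cinj: "\<And>a b. clone t a = clone t b \<longleftrightarrow> a = b"
    by (auto simp: clone_def prod_eq_iff)
  have IH1: "fst (ILT' t (two_section (V, E))) = Vt"
    using Suc unfolding Vt_def by (simp add: two_section_def)
  define R where "R = snd (ILT' t (two_section (V, E)))"
  have IH2: "R = {(u, v). u \<noteq> v \<and> (\<exists>e\<in>Et. u \<in> e \<and> v \<in> e)}"
    using Suc unfolding R_def Et_def by (simp add: two_section_def)
  have S1: "fst (ILT' (Suc t) (two_section (V, E))) = Vt \<union> clone t ` Vt"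
    using IH1 by (simp add: Let_def)
  have S2: "snd (ILT' (Suc t) (two_section (V, E))) =
     R \<union> {(u, clone t v) | u v. (u, v) \<in> R} \<union> {(clone t u, v) | u v. (u, v) \<in> R}"
    unfolding R_def by (simp add: Let_def)
  have T1: "fst (ILTH (Suc t) (V, E)) = Vt \<union> clone t ` Vt"
    unfolding Vt_def by (simp add: Let_def)
  have T2: "snd (ILTH (Suc t) (V, E)) = Et \<union> {(e - {x}) \<union> {clone t x} | e x. e \<in> Et \<and> x \<in> e}"
    unfolding Et_def by (simp add: Let_def)
  have key: "R \<union> {(u, clone t v) | u v. (u, v) \<in> R} \<union> {(clone t u, v) | u v. (u, v) \<in> R}
     = {(u, v). u \<noteq> v \<and> (\<exists>e\<in>Et \<union> {(e - {x}) \<union> {clone t x} | e x. e \<in> Et \<and> x \<in> e}. u \<in> e \<and> v \<in> e)}"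
  proof (intro equalityI subsetI)
    fix p assume p: "p \<in> R \<union> {(u, clone t v) | u v. (u, v) \<in> R} \<union> {(clone t u, v) | u v. (u, v) \<in> R}"
    show "p \<in> {(u, v). u \<noteq> v \<and> (\<exists>e\<in>Et \<union> {(e - {x}) \<union> {clone t x} | e x. e \<in> Et \<and> x \<in> e}. u \<in> e \<and> v \<in> e)}"
    proof -
      have "p \<in> R \<or> (\<exists>u v. p = (u, clone t v) \<and> (u, v) \<in> R) \<or> (\<exists>u v. p = (clone t u, v) \<and> (u, v) \<in> R)"
        using p by blast
      then show ?thesis
      proof (elim disjE exE conjE)
        assume "p \<in> R" then show ?thesis unfolding IH2 by blast
      next
        fix u v assume pe: "p = (u, clone t v)" and uv: "(u, v) \<in> R"
        then obtain e where e: "e \<in> Et" "u \<in> e" "v \<in> e" "u \<noteq> v" unfolding IH2 by blast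
        have "u \<noteq> clone t v" using fresh[of v u] inv2[OF e(1)] e by auto
        moreover have "(e - {v}) \<union> {clone t v} \<in> {(e - {x}) \<union> {clone t x} | e x. e \<in> Et \<and> x \<in> e}"
          using e by blast
        moreover have "u \<in> (e - {v}) \<union> {clone t v}" "clone t v \<in> (e - {v}) \<union> {clone t v}" using e by auto
        ultimately show ?thesis unfolding pe by blast
      next
        fix u v assume pe: "p = (clone t u, v)" and uv: "(u, v) \<in> R"
        then obtain e where e: "e \<in> Et" "u \<in> e" "v \<in> e" "u \<noteq> v" unfolding IH2 by blast
        have "clone t u \<noteq> v" using fresh[of u v] inv2[OF e(1)] e by auto
        moreover have "(e - {u}) \<union> {clone t u} \<in> {(e - {x}) \<union> {clone t x} | e x. e \<in> Et \<and> x \<in> e}"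
          using e by blast
        moreover have "v \<in> (e - {u}) \<union> {clone t u}" "clone t u \<in> (e - {u}) \<union> {clone t u}" using e by auto
        ultimately show ?thesis unfolding pe by blast
      qed
    qed
  next
    fix p assume p: "p \<in> {(u, v). u \<noteq> v \<and> (\<exists>e\<in>Et \<union> {(e - {x}) \<union> {clone t x} | e x. e \<in> Et \<and> x \<in> e}. u \<in> e \<and> v \<in> e)}"
    then obtain a b e' where pe: "p = (a, b)" "a \<noteq> b" "e' \<in> Et \<union> {(e - {x}) \<union> {clone t x} | e x. e \<in> Et \<and> x \<in> e}" "a \<in> e'" "b \<in> e'"
      by blast
    show "p \<in> R \<union> {(u, clone t v) | u v. (u, v) \<in> R} \<union> {(clone t u, v) | u v. (u, v) \<in> R}"
    proof (cases "e' \<in> Et")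
      case True then show ?thesis using pe unfolding IH2 by blast
    next
      case False
      then obtain e x where ex: "e \<in> Et" "x \<in> e" "e' = (e - {x}) \<union> {clone t x}" using pe by blast
      show ?thesis
      proof (cases "a = clone t x")
        case True
        then have "b \<in> e" "b \<noteq> x" using pe ex by auto
        then have "(x, b) \<in> R" unfolding IH2 using ex by blast
        then show ?thesis using True pe by blast
      next
        case na: False
        then have a1: "a \<in> e" "a \<noteq> x" using pe ex by auto
        show ?thesis
        proof (cases "b = clone t x")
          case True
          then have "(a, x) \<in> R" unfolding IH2 using ex a1 by blast
          then show ?thesis using True pe by blast
        next
          case False
          then have "b \<in> e" using pe ex by auto
          then have "(a, b) \<in> R" unfolding IH2 using ex a1 pe by blast
          then show ?thesis using pe by blast
        qed
      qed
    qed
  qed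
  have TS: "two_section (ILTH (Suc t) (V, E)) = (Vt \<union> clone t ` Vt,
     {(u, v). u \<noteq> v \<and> (\<exists>e\<in>Et \<union> {(e - {x}) \<union> {clone t x} | e x. e \<in> Et \<and> x \<in> e}. u \<in> e \<and> v \<in> e)})"
    unfolding two_section_def T1 T2 ..
  show ?case
    unfolding TS
    by (rule prod_eqI) (simp_all only: fst_conv snd_conv S1 S2 key)
qed

end
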